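(* There exist a finite or countable subset $Y_0\subseteq Y$ and a measurable partition $(\Omega_y)_{y\in Y_0}$ of $\Omega$ such that $L_{\xi,y}(y)>0$ for every $y\in Y_0$ and every $\xi\in\Omega_y$.
   Context: Let $G$ be a metrizable, $\sigma$-compact locally compact abelian group (written additively) with Haar measure $\nu$, and $(Y,\lambda)$ a $\sigma$-finite measure space with $L^2(G,\nu)$, $L^2(Y,\lambda)$ separable. Let $H$ be a reproducing kernel Hilbert space of complex functions on $G\times Y$ whose inner product is that of $L^2(G\times Y,\nu\otimes\lambda)$, with reproducing kernel $(K_{x,y})_{(x,y)\in G\times Y}$. Assume $K_{x,y}(u,v)=K_{0,y}(u-x,v)$ for all $u,x\in G$, $v,y\in Y$, and $\sup_{v\in Y}\int_G|K_{0,y}(u,v)|\,d\nu(u)<\infty$ for every $y\in Y$. Let $\widehat G$ be the dual group. Define $L_{\xi,y}(v)=\int_G K_{0,y}(u,v)\overline{\xi(u)}\,d\nu(u)$ for $\xi\in\widehat G$, $y,v\in Y$, and $\Omega=\{\xi\in\widehat G:\exists y\in Y,\ L_{\xi,y}(y)>0\}$. *)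

theory Defs
  imports "HOL-Analysis.Analysis"
begin

definition metrizable_sigma_compact_lca :: "'g::{ab_group_add, metric_space} itself \<Rightarrow> bool" where
  "metrizable_sigma_compact_lca _ \<longleftrightarrow>
     continuous_on UNIV (\<lambda>p::'g \<times> 'g. fst p + snd p) \<and>
     continuous_on UNIV (\<lambda>a::'g. - a) \<and>
     (\<forall>x::'g. \<exists>U K. open U \<and> compact K \<and> x \<in> U \<and> U \<subseteq> K) \<and>
     (\<exists>C::nat \<Rightarrow> 'g set. (\<forall>n. compact (C n)) \<and> (\<Union>n. C n) = UNIV)"

text \<open>Haar measure: a nonzero translation invariant Borel measure, finite on compact
  sets and positive on nonempty open sets (on a sigma-compact metrizable locally compact
  space such a measure is automatically Radon).\<close>

definition haar_measure :: "'g::{ab_group_add, metric_space} measure \<Rightarrow> bool" where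
  "haar_measure nu \<longleftrightarrow>
     sets nu = sets borel \<and>
     (\<forall>x A. A \<in> sets borel \<longrightarrow> emeasure nu ((\<lambda>a. x + a) ` A) = emeasure nu A) \<and>
     (\<forall>K. compact K \<longrightarrow> emeasure nu K < \<infinity>) \<and>
     (\<forall>U. open U \<and> U \<noteq> {} \<longrightarrow> emeasure nu U > 0)"

definition square_integrable :: "'a measure \<Rightarrow> ('a \<Rightarrow> complex) \<Rightarrow> bool" where
  "square_integrable M f \<longleftrightarrow> f \<in> borel_measurable M \<and> integrable M (\<lambda>x. (cmod (f x))\<^sup>2)"

definition L2_separable :: "'a measure \<Rightarrow> bool" where
  "L2_separable M \<longleftrightarrow>
     (\<exists>D. countable D \<and> (\<forall>d\<in>D. square_integrable M d) \<and>
        (\<forall>f. square_integrable M f \<longrightarrow>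
           (\<forall>e>0. \<exists>d\<in>D. (\<integral>x. (cmod (f x - d x))\<^sup>2 \<partial>M) < e)))"

definition L2_inner :: "'a measure \<Rightarrow> ('a \<Rightarrow> complex) \<Rightarrow> ('a \<Rightarrow> complex) \<Rightarrow> complex" where
  "L2_inner M f g = (\<integral>x. f x * cnj (g x) \<partial>M)"

text \<open>\<open>H\<close> is a Hilbert space of (genuine) complex functions on the space of \<open>M\<close>,
  with the inner product of \<open>L\<^sup>2(M)\<close>, and \<open>K\<close> is its reproducing kernel.\<close>

definition rkhs_in_L2 :: "'a measure \<Rightarrow> ('a \<Rightarrow> complex) set \<Rightarrow> ('a \<Rightarrow> 'a \<Rightarrow> complex) \<Rightarrow> bool" where
  "rkhs_in_L2 M H K \<longleftrightarrow>
     (\<forall>f\<in>H. square_integrable M f) \<and>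
     (\<lambda>_. 0) \<in> H \<and>
     (\<forall>f\<in>H. \<forall>g\<in>H. (\<lambda>x. f x + g x) \<in> H) \<and>
     (\<forall>f\<in>H. \<forall>c::complex. (\<lambda>x. c * f x) \<in> H) \<and>
     \<comment> \<open>completeness w.r.t. the L^2 norm\<close>
     (\<forall>s::nat \<Rightarrow> 'a \<Rightarrow> complex. (\<forall>n. s n \<in> H) \<longrightarrow>
        (\<forall>e>0. \<exists>N. \<forall>m\<ge>N. \<forall>n\<ge>N. (\<integral>x. (cmod (s m x - s n x))\<^sup>2 \<partial>M) < e) \<longrightarrow>
        (\<exists>f\<in>H. (\<lambda>n. \<integral>x. (cmod (s n x - f x))\<^sup>2 \<partial>M) \<longlonglongrightarrow> 0)) \<and>
     \<comment> \<open>reproducing kernel\<close>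
     (\<forall>p\<in>space M. K p \<in> H) \<and>
     (\<forall>f\<in>H. \<forall>p\<in>space M. f p = L2_inner M f (K p))"

definition dual_group :: "('g::{ab_group_add, metric_space} \<Rightarrow> complex) set" where
  "dual_group = {\<xi>. continuous_on UNIV \<xi> \<and> (\<forall>a. cmod (\<xi> a) = 1) \<and>
                    (\<forall>a b. \<xi> (a + b) = \<xi> a * \<xi> b)}"

definition dual_topology :: "('g::{ab_group_add, metric_space} \<Rightarrow> complex) topology" where
  "dual_topology = topology_generated_by
     {{\<xi>\<in>dual_group. \<xi> ` K \<subseteq> U} | K U. compact K \<and> open U}"

definition borel_of :: "'a topology \<Rightarrow> 'a measure" where
  "borel_of X = sigma (topspace X) {U. openin X U}"

definition Lfun :: "'g::{ab_group_add, metric_space} measure \<Rightarrow> ('g \<times> 'y \<Rightarrow> 'g \<times> 'y \<Rightarrow> complex)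
    \<Rightarrow> ('g \<Rightarrow> complex) \<Rightarrow> 'y \<Rightarrow> 'y \<Rightarrow> complex" where
  "Lfun nu K \<xi> y v = (\<integral>u. K (0, y) (u, v) * cnj (\<xi> u) \<partial>nu)"

definition cpos :: "complex \<Rightarrow> bool" where
  "cpos z \<longleftrightarrow> Im z = 0 \<and> Re z > 0"

definition Omega_set :: "'g::{ab_group_add, metric_space} measure \<Rightarrow> 'y measure
    \<Rightarrow> ('g \<times> 'y \<Rightarrow> 'g \<times> 'y \<Rightarrow> complex) \<Rightarrow> ('g \<Rightarrow> complex) set" where
  "Omega_set nu lam K = {\<xi>\<in>dual_group. \<exists>y\<in>space lam. cpos (Lfun nu K \<xi> y y)}"

end

theory Submission
  imports Defs
begin

lemma sc_dense:
  assumes G: "metrizable_sigma_compact_lca TYPE('g::{ab_group_add, metric_space})"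
  shows "\<exists>D::'g set. countable D \<and> (\<forall>x e. e > 0 \<longrightarrow> (\<exists>d\<in>D. dist x d < e))"
proof -
  obtain C :: "nat \<Rightarrow> 'g set" where C: "\<And>n. compact (C n)" "(\<Union>n. C n) = UNIV"
    using G unfolding metrizable_sigma_compact_lca_def by blast
  have "\<exists>T. finite T \<and> T \<subseteq> C n \<and> C n \<subseteq> (\<Union>c\<in>T. ball c (1 / Suc m))" for n m
  proof -
    have "C n \<subseteq> (\<Union>c\<in>C n. ball c (1 / Suc m))" by auto
    from compactE_image[OF C(1)[of n] _ this] show ?thesis by (metis open_ball)
  qed
  then obtain T where T: "\<And>n m. finite (T n m) \<and> T n m \<subseteq> C n \<and> C n \<subseteq> (\<Union>c\<in>T n m. ball c (1 / Suc m))"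
    by metis
  define D where "D = (\<Union>n m. T n m)"
  have cT: "countable (T n m)" for n m using T countable_finite by blast
  have "countable D" unfolding D_def using cT by auto
  moreover have "\<exists>d\<in>D. dist x d < e" if e: "e > 0" for x :: 'g and e
  proof -
    obtain n where n: "x \<in> C n" using C(2) by auto
    obtain m where m: "1 / Suc m < e" using nat_approx_posE[OF e] by blast
    from T[of n m] n obtain c where "c \<in> T n m" "x \<in> ball c (1 / Suc m)" by auto
    then have "c \<in> D" "dist x c < e" using m unfolding D_def by (auto simp: dist_commute)
    then show ?thesis by blast
  qed
  ultimately show ?thesis by blast
qed

lemma open_in_pair_sets:
  fixes D :: "'g::metric_space set"
  assumes D: "countable D" "\<And>x e. e > 0 \<Longrightarrow> \<exists>d\<in>D. dist x d < e"
    and Op: "open (Op :: ('g \<times> 'g) set)"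
  shows "Op \<in> sets (borel \<Otimes>\<^sub>M borel)"
proof -
  define I where "I = {(a,b,r). a \<in> D \<and> b \<in> D \<and> r \<in> \<rat> \<and> r > 0 \<and> ball a r \<times> ball b r \<subseteq> Op}"
  have cI: "countable I"
  proof -
    have "I \<subseteq> D \<times> D \<times> \<rat>" unfolding I_def by auto
    moreover have "countable (D \<times> D \<times> (\<rat>::real set))" using D(1) countable_rat by auto
    ultimately show ?thesis by (rule countable_subset)
  qed
  have eq: "Op = (\<Union>(a,b,r)\<in>I. ball a r \<times> ball b r)"
  proof
    show "(\<Union>(a,b,r)\<in>I. ball a r \<times> ball b r) \<subseteq> Op" unfolding I_def by auto
  next
    show "Op \<subseteq> (\<Union>(a,b,r)\<in>I. ball a r \<times> ball b r)"
    proof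
      fix p assume "p \<in> Op"
      obtain x y where p: "p = (x,y)" by force
      obtain e where e: "e > 0" "ball (x,y) e \<subseteq> Op" using Op \<open>p \<in> Op\<close> p open_contains_ball by metis
      obtain r where r: "r \<in> \<rat>" "0 < r" "r < e/4" using e(1) Rats_dense_in_real[of 0 "e/4"] by auto
      obtain a where a: "a \<in> D" "dist x a < r" using D(2) r(2) by blast
      obtain b where b: "b \<in> D" "dist y b < r" using D(2) r(2) by blast
      have sub: "ball a r \<times> ball b r \<subseteq> Op"
      proof
        fix q assume q: "q \<in> ball a r \<times> ball b r"
        obtain u v where qq: "q = (u,v)" by force
        have "dist x u < 2*r" using q qq a(2) dist_triangle[of x u a] by (auto simp: dist_commute)
        moreover have "dist y v < 2*r" using q qq b(2) dist_triangle[of y v b] by (auto simp: dist_commute)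
        ultimately have "dist (x,y) (u,v) < e"
          using r(3) dist_Pair_Pair[of x y u v] sqrt_sum_squares_le_sum_abs[of "dist x u" "dist y v"]
          by auto
        then show "q \<in> Op" using e(2) qq by auto
      qed
      have "(a,b,r) \<in> I" unfolding I_def using a b r sub by auto
      moreover have "p \<in> ball a r \<times> ball b r" using p a b by (auto simp: dist_commute)
      ultimately show "p \<in> (\<Union>(a,b,r)\<in>I. ball a r \<times> ball b r)" by blast
    qed
  qed
  show ?thesis
    apply (subst eq)
    apply (rule sets.countable_UN'')
    using cI by auto
qed

locale haar_ctx =
  fixes nu :: "'g::{ab_group_add, metric_space} measure"
  assumes G: "metrizable_sigma_compact_lca TYPE('g)"
    and haar: "haar_measure nu"
begin

lemma haar_parts: "sets nu = sets borel"
  "\<And>x A. A \<in> sets borel \<Longrightarrow> emeasure nu ((\<lambda>a. x + a) ` A) = emeasure nu A"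
  "\<And>K. compact K \<Longrightarrow> emeasure nu K < \<infinity>"
  "\<And>U. open U \<Longrightarrow> U \<noteq> {} \<Longrightarrow> emeasure nu U > 0"
  using haar unfolding haar_measure_def by auto

lemma sets_nu: "sets nu = sets borel"
  by (rule haar_parts(1))

lemma space_nu[simp]: "space nu = UNIV"
  using sets_eq_imp_space_eq[OF sets_nu] by simp

lemma transl_inv: "A \<in> sets borel \<Longrightarrow> emeasure nu ((\<lambda>a. x + a) ` A) = emeasure nu A"
  by (rule haar_parts(2))

lemma compact_fin: "compact K \<Longrightarrow> emeasure nu K < \<infinity>"
  by (rule haar_parts(3))

lemma open_pos: "open U \<Longrightarrow> U \<noteq> {} \<Longrightarrow> emeasure nu U > 0"
  by (rule haar_parts(4))

lemma cont_add: "continuous_on UNIV (\<lambda>p::'g\<times>'g. fst p + snd p)"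
  using G unfolding metrizable_sigma_compact_lca_def by (elim conjE)

lemma cont_uminus: "continuous_on UNIV (\<lambda>a::'g. - a)"
  using G unfolding metrizable_sigma_compact_lca_def by (elim conjE)

lemma cont_diff: "continuous_on UNIV (\<lambda>p::'g\<times>'g. fst p - snd p)"
proof -
  have c1: "continuous_on UNIV (\<lambda>p::'g\<times>'g. (fst p, - snd p))"
    by (intro continuous_on_Pair continuous_on_fst continuous_on_id
        continuous_on_compose2[OF cont_uminus continuous_on_snd[OF continuous_on_id]]) auto
  have "continuous_on UNIV ((\<lambda>p::'g\<times>'g. fst p + snd p) \<circ> (\<lambda>p::'g\<times>'g. (fst p, - snd p)))"
    by (rule continuous_on_compose[OF c1]) (use cont_add in \<open>auto intro: continuous_on_subset\<close>)
  then show ?thesis by (simp add: comp_def)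
qed

lemma cont_transl: "continuous_on UNIV (\<lambda>y::'g. a + y)"
proof -
  have c1: "continuous_on UNIV (\<lambda>y::'g. (a, y))"
    by (intro continuous_on_Pair continuous_on_const continuous_on_id)
  have "continuous_on UNIV ((\<lambda>p::'g\<times>'g. fst p + snd p) \<circ> (\<lambda>y::'g. (a, y)))"
    by (rule continuous_on_compose[OF c1]) (use cont_add in \<open>auto intro: continuous_on_subset\<close>)
  then show ?thesis by (simp add: comp_def)
qed

lemma meas_cont1: "continuous_on UNIV (f::'g \<Rightarrow> 'g) \<Longrightarrow> f \<in> measurable nu nu"
  using borel_measurable_continuous_onI[of f] measurable_cong_sets[OF sets_nu sets_nu] by simp

lemma meas_cont2:
  assumes f: "continuous_on UNIV (f::'g\<times>'g \<Rightarrow> 'g)"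
  shows "f \<in> measurable (nu \<Otimes>\<^sub>M nu) nu"
proof -
  obtain D :: "'g set" where D: "countable D" "\<And>x e. e > 0 \<Longrightarrow> \<exists>d\<in>D. dist x d < e"
    using sc_dense[OF G] by blast
  have "f \<in> borel_measurable (borel \<Otimes>\<^sub>M borel)"
  proof (rule borel_measurableI)
    fix S :: "'g set" assume "open S"
    then have "open (f -` S)" using f continuous_on_open_vimage[of UNIV f] by auto
    then show "f -` S \<inter> space (borel \<Otimes>\<^sub>M borel) \<in> sets (borel \<Otimes>\<^sub>M borel)"
      using open_in_pair_sets[OF D] by (simp add: space_pair_measure)
  qed
  moreover have "measurable (nu \<Otimes>\<^sub>M nu) nu = measurable (borel \<Otimes>\<^sub>M borel) borel"
    by (rule measurable_cong_sets[OF sets_pair_measure_cong[OF sets_nu sets_nu] sets_nu])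
  ultimately show ?thesis by (simp only:)
qed

lemma meas_add: "(\<lambda>p. fst p + snd p) \<in> measurable (nu \<Otimes>\<^sub>M nu) nu"
  by (rule meas_cont2[OF cont_add])

lemma meas_diff: "(\<lambda>p. fst p - snd p) \<in> measurable (nu \<Otimes>\<^sub>M nu) nu"
  by (rule meas_cont2[OF cont_diff])

lemma meas_uminus: "uminus \<in> measurable nu nu"
  using meas_cont1[OF cont_uminus] by simp

lemma meas_transl: "(\<lambda>y. a + y) \<in> measurable nu nu"
  by (rule meas_cont1[OF cont_transl])

lemma sigma_finite: "sigma_finite_measure nu"
proof
  obtain C :: "nat \<Rightarrow> 'g set" where C: "\<And>n. compact (C n)" "(\<Union>n. C n) = UNIV"
    using G unfolding metrizable_sigma_compact_lca_def by blast
  show "\<exists>A::'g set set. countable A \<and> A \<subseteq> sets nu \<and> \<Union> A = space nu \<and> (\<forall>a\<in>A. emeasure nu a \<noteq> \<infinity>)"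
    apply (rule exI[of _ "range C"])
    using C compact_fin by (auto simp: sets_nu less_top intro!: borel_closed compact_imp_closed)
qed

lemma distr_transl: "distr nu nu (\<lambda>y. a + y) = nu"
proof (rule measure_eqI)
  fix A assume A: "A \<in> sets (distr nu nu (\<lambda>y. a + y))"
  then have A': "A \<in> sets borel" by (simp add: sets_nu)
  have eq: "(\<lambda>y. a + y) -` A = (\<lambda>b. -a + b) ` A"
  proof
    show "(\<lambda>y. a + y) -` A \<subseteq> (\<lambda>b. -a + b) ` A"
    proof
      fix y assume "y \<in> (\<lambda>y. a + y) -` A"
      then show "y \<in> (\<lambda>b. -a + b) ` A" by (intro image_eqI[of _ _ "a + y"]) auto
    qed
  qed auto
  have "emeasure (distr nu nu (\<lambda>y. a + y)) A = emeasure nu ((\<lambda>y. a + y) -` A \<inter> space nu)"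
    by (rule emeasure_distr[OF meas_transl]) (use A in simp)
  also have "\<dots> = emeasure nu ((\<lambda>b. -a + b) ` A)"
    by (simp only: space_nu Int_UNIV_right eq)
  also have "\<dots> = emeasure nu A" by (rule transl_inv[OF A'])
  finally show "emeasure (distr nu nu (\<lambda>y. a + y)) A = emeasure nu A" .
qed simp

lemma nn_transl:
  assumes g: "g \<in> borel_measurable nu"
  shows "(\<integral>\<^sup>+y. g (a + y) \<partial>nu) = integral\<^sup>N nu g"
proof -
  have "integral\<^sup>N nu g = integral\<^sup>N (distr nu nu (\<lambda>y. a + y)) g" by (simp add: distr_transl)
  also have "\<dots> = (\<integral>\<^sup>+y. g (a + y) \<partial>nu)"
    by (rule nn_integral_distr) (use g meas_transl in auto)
  finally show ?thesis by simp
qed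

lemma exK: "\<exists>K. K \<in> sets nu \<and> 0 < emeasure nu K \<and> emeasure nu K < \<infinity>"
proof -
  obtain U K where UK: "open U" "compact K" "(0::'g) \<in> U" "U \<subseteq> K"
    using G unfolding metrizable_sigma_compact_lca_def by blast
  have Ks: "K \<in> sets nu" using UK(2) by (simp add: sets_nu borel_closed compact_imp_closed)
  have Us: "U \<in> sets nu" using UK(1) by (simp add: sets_nu borel_open)
  have "0 < emeasure nu U" using open_pos UK by auto
  also have "\<dots> \<le> emeasure nu K" by (rule emeasure_mono[OF UK(4) Ks])
  finally show ?thesis using Ks compact_fin[OF UK(2)] by blast
qed

end

context haar_ctx begin

lemma inversion_emeasure:
  assumes A: "A \<in> sets nu"
  shows "emeasure nu (uminus -` A) = emeasure nu A"
proof -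
  interpret pair_sigma_finite nu nu
    using sigma_finite by (simp add: pair_sigma_finite_def)
  obtain K where K: "K \<in> sets nu" "0 < emeasure nu K" "emeasure nu K < \<infinity>"
    using exK by blast
  have mA: "(\<lambda>x. indicator A x :: ennreal) \<in> borel_measurable nu" using A by simp
  have mK: "(\<lambda>x. indicator K x :: ennreal) \<in> borel_measurable nu" using K by simp
  have mAm: "uminus -` A \<in> sets nu"
    using measurable_sets[OF meas_uminus A] by simp
  have f1: "(\<lambda>p. indicator A (fst p) * indicator K (fst p + snd p) :: ennreal) \<in> borel_measurable (nu \<Otimes>\<^sub>M nu)"
  proof -
    have "(\<lambda>p. indicator A (fst p) :: ennreal) \<in> borel_measurable (nu \<Otimes>\<^sub>M nu)"
      using measurable_compose[OF measurable_fst[of nu nu] mA] by simp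
    moreover have "(\<lambda>p. indicator K (fst p + snd p) :: ennreal) \<in> borel_measurable (nu \<Otimes>\<^sub>M nu)"
      using measurable_compose[OF meas_add mK] by simp
    ultimately show ?thesis by (rule borel_measurable_times_ennreal)
  qed
  have f2: "(\<lambda>p. indicator A (fst p - snd p) * indicator K (fst p) :: ennreal) \<in> borel_measurable (nu \<Otimes>\<^sub>M nu)"
  proof -
    have "(\<lambda>p. indicator A (fst p - snd p) :: ennreal) \<in> borel_measurable (nu \<Otimes>\<^sub>M nu)"
      using measurable_compose[OF meas_diff mA] by simp
    moreover have "(\<lambda>p. indicator K (fst p) :: ennreal) \<in> borel_measurable (nu \<Otimes>\<^sub>M nu)"
      using measurable_compose[OF measurable_fst[of nu nu] mK] by simp
    ultimately show ?thesis by (rule borel_measurable_times_ennreal)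
  qed
  have inner1: "(\<integral>\<^sup>+y. indicator K (x + y) \<partial>nu) = emeasure nu K" for x
    using nn_transl[OF mK, of x] K(1) by simp
  have inner2: "(\<integral>\<^sup>+x. indicator A x * indicator K (x + y) \<partial>nu)
      = (\<integral>\<^sup>+z. indicator A (z - y) * indicator K z \<partial>nu)" for y
  proof -
    have m: "(\<lambda>z. indicator A (z - y) * indicator K z :: ennreal) \<in> borel_measurable nu"
    proof -
      have "(\<lambda>z. z - y) \<in> measurable nu nu"
        using meas_transl[of "-y"] by (simp add: algebra_simps)
      from measurable_compose[OF this mA] mK show ?thesis by (auto intro: borel_measurable_times_ennreal)
    qed
    from nn_transl[OF m, of y] show ?thesis by (simp add: add.commute)
  qed
  have inner3: "(\<integral>\<^sup>+y. indicator A (z - y) * indicator K z \<partial>nu)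
      = indicator K z * emeasure nu (uminus -` A)" for z
  proof -
    have m: "(\<lambda>w. indicator A (- w) :: ennreal) \<in> borel_measurable nu"
      using measurable_compose[OF meas_uminus mA] by simp
    have "(\<integral>\<^sup>+y. indicator A (z - y) \<partial>nu) = (\<integral>\<^sup>+w. indicator A (- w) \<partial>nu)"
      using nn_transl[OF m, of "-z"] by simp
    also have "\<dots> = (\<integral>\<^sup>+w. indicator (uminus -` A) w \<partial>nu)"
      by (simp add: indicator_def)
    also have "\<dots> = emeasure nu (uminus -` A)" using mAm by simp
    finally have "(\<integral>\<^sup>+y. indicator A (z - y) \<partial>nu) = emeasure nu (uminus -` A)" .
    moreover have "(\<integral>\<^sup>+y. indicator A (z - y) * indicator K z \<partial>nu)
        = indicator K z * (\<integral>\<^sup>+y. indicator A (z - y) \<partial>nu)"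
    proof -
      have "(\<lambda>y. indicator A (z - y) :: ennreal) \<in> borel_measurable nu"
        using measurable_compose[OF meas_transl[of "-z"] m] by simp
      then show ?thesis
        by (subst nn_integral_cmult[symmetric]) (auto simp: mult.commute)
    qed
    ultimately show ?thesis by simp
  qed
  have "emeasure nu A * emeasure nu K = (\<integral>\<^sup>+x. indicator A x * emeasure nu K \<partial>nu)"
    using A by (simp add: nn_integral_multc[OF mA])
  also have "\<dots> = (\<integral>\<^sup>+x. (\<integral>\<^sup>+y. indicator A x * indicator K (x + y) \<partial>nu) \<partial>nu)"
  proof (rule nn_integral_cong)
    fix x
    have "(\<lambda>y. indicator K (x + y) :: ennreal) \<in> borel_measurable nu"
      using measurable_compose[OF meas_transl mK] by simp
    then show "indicator A x * emeasure nu K = (\<integral>\<^sup>+y. indicator A x * indicator K (x + y) \<partial>nu)"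
      by (simp add: nn_integral_cmult inner1)
  qed
  also have "\<dots> = (\<integral>\<^sup>+y. (\<integral>\<^sup>+x. indicator A x * indicator K (x + y) \<partial>nu) \<partial>nu)"
    using Fubini[OF f1] by simp
  also have "\<dots> = (\<integral>\<^sup>+y. (\<integral>\<^sup>+z. indicator A (z - y) * indicator K z \<partial>nu) \<partial>nu)"
    by (simp add: inner2)
  also have "\<dots> = (\<integral>\<^sup>+z. (\<integral>\<^sup>+y. indicator A (z - y) * indicator K z \<partial>nu) \<partial>nu)"
    using Fubini[OF f2] by simp
  also have "\<dots> = (\<integral>\<^sup>+z. indicator K z * emeasure nu (uminus -` A) \<partial>nu)"
    by (simp add: inner3)
  also have "\<dots> = emeasure nu K * emeasure nu (uminus -` A)"
    using K(1) by (simp add: nn_integral_multc[OF mK])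
  finally have "emeasure nu K * emeasure nu A = emeasure nu K * emeasure nu (uminus -` A)"
    by (simp add: mult.commute)
  then show ?thesis using K(2,3) by (auto simp: ennreal_mult_cancel_left less_top)
qed

lemma distr_uminus: "distr nu nu uminus = nu"
proof (rule measure_eqI)
  fix A assume A: "A \<in> sets (distr nu nu uminus)"
  then have A': "A \<in> sets nu" by simp
  have "emeasure (distr nu nu uminus) A = emeasure nu (uminus -` A \<inter> space nu)"
    by (rule emeasure_distr[OF meas_uminus A'])
  also have "\<dots> = emeasure nu A" using inversion_emeasure[OF A'] by simp
  finally show "emeasure (distr nu nu uminus) A = emeasure nu A" .
qed simp

lemma integral_uminus:
  fixes f :: "'g \<Rightarrow> complex"
  assumes f: "f \<in> borel_measurable nu"
  shows "(\<integral>x. f (- x) \<partial>nu) = integral\<^sup>L nu f"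
proof -
  have "integral\<^sup>L nu f = integral\<^sup>L (distr nu nu uminus) f" by (simp add: distr_uminus)
  also have "\<dots> = (\<integral>x. f (- x) \<partial>nu)" by (rule integral_distr[OF meas_uminus f])
  finally show ?thesis by simp
qed

end

lemma dual_facts:
  assumes "\<xi> \<in> (dual_group :: ('g::{ab_group_add, metric_space} \<Rightarrow> complex) set)"
  shows "continuous_on UNIV \<xi>" "\<And>a. cmod (\<xi> a) = 1" "\<And>a b. \<xi> (a + b) = \<xi> a * \<xi> b"
  using assms unfolding dual_group_def by auto

lemma dual_zero:
  assumes "\<xi> \<in> (dual_group :: ('g::{ab_group_add, metric_space} \<Rightarrow> complex) set)"
  shows "\<xi> 0 = 1"
proof -
  have "\<xi> 0 = \<xi> 0 * \<xi> 0" using dual_facts(3)[OF assms, of 0 0] by simp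
  moreover have "\<xi> 0 \<noteq> 0" using dual_facts(2)[OF assms, of 0] by auto
  ultimately show ?thesis by (metis mult_cancel_left1)
qed

lemma dual_uminus:
  assumes "\<xi> \<in> (dual_group :: ('g::{ab_group_add, metric_space} \<Rightarrow> complex) set)"
  shows "\<xi> (- a) = cnj (\<xi> a)"
proof -
  have "\<xi> (- a) * \<xi> a = 1" using dual_facts(3)[OF assms, of "-a" a] dual_zero[OF assms] by simp
  moreover have "cnj (\<xi> a) * \<xi> a = 1"
    using dual_facts(2)[OF assms, of a] by (metis complex_norm_square mult.commute of_real_1 power_one)
  moreover have "\<xi> a \<noteq> 0" using dual_facts(2)[OF assms, of a] by auto
  ultimately show ?thesis by (metis mult_cancel_right)
qed

lemma topspace_dual: "topspace (dual_topology :: ('g::{ab_group_add, metric_space} \<Rightarrow> complex) topology) = dual_group"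
proof -
  have "{\<xi>\<in>(dual_group :: ('g \<Rightarrow> complex) set). \<xi> ` {} \<subseteq> UNIV} \<in>
     {{\<xi>\<in>(dual_group :: ('g \<Rightarrow> complex) set). \<xi> ` K \<subseteq> U} | K U. compact K \<and> open U}"
    by blast
  then show ?thesis unfolding dual_topology_def topology_generated_by_topspace by auto
qed

lemma space_borel_of[simp]: "space (borel_of X) = topspace X"
  unfolding borel_of_def by (rule space_measure_of) (auto dest: openin_subset)

lemma openin_sets_borel_of: "openin X U \<Longrightarrow> U \<in> sets (borel_of X)"
  unfolding borel_of_def by (subst sets_measure_of) (auto dest: openin_subset)

lemma subbasic_open:
  assumes "compact K" "open U"
  shows "openin (dual_topology :: ('g::{ab_group_add, metric_space} \<Rightarrow> complex) topology)
           {\<xi>\<in>dual_group. \<xi> ` K \<subseteq> U}"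
  unfolding dual_topology_def by (rule topology_generated_by_Basis) (use assms in blast)

lemma dual_near:
  fixes C :: "'g::{ab_group_add, metric_space} set"
  assumes C: "compact C" and xi0: "\<xi>0 \<in> dual_group" and e: "e > 0"
  shows "\<exists>W. openin dual_topology W \<and> \<xi>0 \<in> W \<and> (\<forall>\<eta>\<in>W. \<forall>c\<in>C. cmod (\<eta> c - \<xi>0 c) < e)"
proof -
  have "uniformly_continuous_on C \<xi>0"
    using compact_uniformly_continuous[OF continuous_on_subset[OF dual_facts(1)[OF xi0]] C] by simp
  then obtain d where d: "d > 0" "\<And>x x'. x \<in> C \<Longrightarrow> x' \<in> C \<Longrightarrow> dist x' x < d \<Longrightarrow> dist (\<xi>0 x') (\<xi>0 x) < e/2"
    unfolding uniformly_continuous_on_def using e by (metis half_gt_zero)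
  have "C \<subseteq> (\<Union>c\<in>C. ball c (d/2))" using d(1) by auto
  from compactE_image[OF C _ this] obtain T where T: "T \<subseteq> C" "finite T" "C \<subseteq> (\<Union>c\<in>T. ball c (d/2))"
    by (metis open_ball)
  define W where "W = (\<Inter>c\<in>T. {\<xi>\<in>dual_group. \<xi> ` (C \<inter> cball c (d/2)) \<subseteq> ball (\<xi>0 c) (e/2)}) \<inter> topspace dual_topology"
  have "openin dual_topology W"
    unfolding W_def
    by (rule openin_INT[OF T(2)]) (intro subbasic_open compact_Int_closed C closed_cball open_ball)
  moreover have "\<xi>0 \<in> W"
  proof -
    have "\<xi>0 ` (C \<inter> cball c (d/2)) \<subseteq> ball (\<xi>0 c) (e/2)" if "c \<in> T" for c
    proof
      fix y assume "y \<in> \<xi>0 ` (C \<inter> cball c (d/2))"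
      then obtain x where x: "x \<in> C" "dist c x \<le> d/2" "y = \<xi>0 x" by auto
      have "dist x c < d" using x(2) d(1) by (simp add: dist_commute)
      then have "dist (\<xi>0 x) (\<xi>0 c) < e/2" using d(2)[of c x] x(1) T(1) that by auto
      then show "y \<in> ball (\<xi>0 c) (e/2)" using x(3) by (simp add: dist_commute)
    qed
    then show ?thesis unfolding W_def using xi0 topspace_dual by auto
  qed
  moreover have "cmod (\<eta> x - \<xi>0 x) < e" if eta: "\<eta> \<in> W" and xC: "x \<in> C" for \<eta> x
  proof -
    obtain c where c: "c \<in> T" "x \<in> ball c (d/2)" using T(3) xC by auto
    have xc: "x \<in> C \<inter> cball c (d/2)" using c xC by auto
    have "\<eta> x \<in> ball (\<xi>0 c) (e/2)" using eta c(1) xc unfolding W_def by blast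
    moreover have "dist (\<xi>0 x) (\<xi>0 c) < e/2"
      using d(2)[of c x] c T(1) xC d(1) by (auto simp: dist_commute)
    ultimately have "dist (\<eta> x) (\<xi>0 x) < e"
      using dist_triangle_half_l[of "\<eta> x" "\<xi>0 c" e "\<xi>0 x"] by (auto simp: dist_commute)
    then show ?thesis by (simp add: dist_norm)
  qed
  ultimately show ?thesis by blast
qed

context haar_ctx begin

lemma meas_cont_c:
  assumes "continuous_on UNIV (h :: 'g \<Rightarrow> complex)"
  shows "h \<in> borel_measurable nu"
proof -
  have eq: "borel_measurable nu = borel_measurable borel"
    by (rule measurable_cong_sets[OF sets_nu refl])
  show ?thesis unfolding eq by (rule borel_measurable_continuous_onI[OF assms])
qed

lemma meas_dual: "\<xi> \<in> dual_group \<Longrightarrow> \<xi> \<in> borel_measurable nu"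
  using meas_cont_c dual_facts(1) by blast

lemma meas_dual_cnj: "\<xi> \<in> dual_group \<Longrightarrow> (\<lambda>u. cnj (\<xi> u)) \<in> borel_measurable nu"
  by (intro meas_cont_c continuous_on_cnj dual_facts(1))

lemma cmod_cnj_diff: "cmod (cnj a - cnj b) = cmod (a - b)"
  by (metis complex_cnj_diff complex_mod_cnj)

lemma int_weighted:
  fixes f :: "'g \<Rightarrow> complex"
  assumes f: "integrable nu f" and h: "h \<in> borel_measurable nu" and hb: "\<And>u. cmod (h u) \<le> 1"
  shows "integrable nu (\<lambda>u. h u * f u)"
proof (rule Bochner_Integration.integrable_bound[OF f])
  show "(\<lambda>u. h u * f u) \<in> borel_measurable nu"
    using h borel_measurable_integrable[OF f] by (rule borel_measurable_times)
  show "AE x in nu. norm (h x * f x) \<le> norm (f x)"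
    using hb by (auto simp: norm_mult intro!: mult_left_le_one_le)
qed

lemma ft_meas:
  fixes f :: "'g \<Rightarrow> complex"
  assumes f: "integrable nu f"
  shows "(\<lambda>\<xi>. \<integral>u. f u * cnj (\<xi> u) \<partial>nu) \<in> borel_measurable (borel_of dual_topology)"
proof -
  obtain C :: "nat \<Rightarrow> 'g set" where C: "\<And>n. compact (C n)" "(\<Union>n. C n) = UNIV"
    using G unfolding metrizable_sigma_compact_lca_def by (elim exE conjE) blast
  define Cn where "Cn n = (\<Union>m\<le>n. C m)" for n
  have Cn: "compact (Cn n)" for n unfolding Cn_def using C(1) by (intro compact_UN) auto
  have Cns: "Cn n \<in> sets nu" for n using Cn[of n] by (simp add: sets_nu borel_closed compact_imp_closed)
  define F where "F n \<xi> = (\<integral>u. indicator (Cn n) u * f u * cnj (\<xi> u) \<partial>nu)" for n \<xi>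
  have intF: "integrable nu (\<lambda>u. indicator (Cn n) u * f u * cnj (\<xi> u))" if "\<xi> \<in> dual_group" for n \<xi>
  proof -
    have "integrable nu (\<lambda>u. (indicator (Cn n) u * cnj (\<xi> u)) * f u)"
    proof (rule int_weighted[OF f])
      show "(\<lambda>u. indicator (Cn n) u * cnj (\<xi> u)) \<in> borel_measurable nu"
        using Cns meas_dual_cnj[OF that] by (intro borel_measurable_times) auto
      show "cmod (indicator (Cn n) u * cnj (\<xi> u)) \<le> 1" for u
        using dual_facts(2)[OF that] by (auto simp: indicator_def norm_mult)
    qed
    then show ?thesis by (simp add: ac_simps)
  qed
  define L where "L = (\<integral>u. cmod (f u) \<partial>nu)"
  have L0: "L \<ge> 0" unfolding L_def by simp
  have Fmeas: "F n \<in> borel_measurable (borel_of dual_topology)" for n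
  proof (rule borel_measurableI)
    fix S :: "complex set" assume S: "open S"
    have "openin dual_topology (F n -` S \<inter> topspace dual_topology)"
    proof (subst openin_subopen, intro ballI)
      fix \<xi>0 assume x0: "\<xi>0 \<in> F n -` S \<inter> topspace dual_topology"
      then have xi0: "\<xi>0 \<in> dual_group" and FS: "F n \<xi>0 \<in> S" by (auto simp: topspace_dual)
      obtain r where r: "r > 0" "ball (F n \<xi>0) r \<subseteq> S" using S FS open_contains_ball by metis
      define e where "e = r / (L + 1)"
      have e: "e > 0" unfolding e_def using r L0 by auto
      obtain W where W0: "openin dual_topology W \<and> \<xi>0 \<in> W \<and> (\<forall>\<eta>\<in>W. \<forall>c\<in>Cn n. cmod (\<eta> c - \<xi>0 c) < e)"
        using dual_near[OF Cn xi0 e] by (rule exE)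
      have W: "openin dual_topology W" "\<xi>0 \<in> W" "\<And>\<eta> c. \<eta> \<in> W \<Longrightarrow> c \<in> Cn n \<Longrightarrow> cmod (\<eta> c - \<xi>0 c) < e"
        using W0 by simp_all
      have "W \<subseteq> F n -` S \<inter> topspace dual_topology"
      proof
        fix \<eta> assume eta: "\<eta> \<in> W"
        then have etad: "\<eta> \<in> dual_group" using openin_subset[OF W(1)] by (auto simp: topspace_dual)
        have "F n \<eta> - F n \<xi>0 = (\<integral>u. indicator (Cn n) u * f u * cnj (\<eta> u) - indicator (Cn n) u * f u * cnj (\<xi>0 u) \<partial>nu)"
          unfolding F_def by (rule Bochner_Integration.integral_diff[symmetric, OF intF[OF etad] intF[OF xi0]])
        also have "cmod \<dots> \<le> (\<integral>u. cmod (indicator (Cn n) u * f u * cnj (\<eta> u) - indicator (Cn n) u * f u * cnj (\<xi>0 u)) \<partial>nu)"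
          by (rule integral_norm_bound)
        also have "\<dots> \<le> (\<integral>u. e * cmod (f u) \<partial>nu)"
        proof (rule Bochner_Integration.integral_mono)
          show "integrable nu (\<lambda>u. cmod (indicator (Cn n) u * f u * cnj (\<eta> u) - indicator (Cn n) u * f u * cnj (\<xi>0 u)))"
            by (rule integrable_norm[OF Bochner_Integration.integrable_diff[OF intF[OF etad] intF[OF xi0]]])
          show "integrable nu (\<lambda>u. e * cmod (f u))" by (rule integrable_mult_right[OF integrable_norm[OF f]])
          fix u
          have "cmod (indicator (Cn n) u * f u * cnj (\<eta> u) - indicator (Cn n) u * f u * cnj (\<xi>0 u))
              = indicator (Cn n) u * cmod (f u) * cmod (\<eta> u - \<xi>0 u)"
          proof -
            have "indicator (Cn n) u * f u * cnj (\<eta> u) - indicator (Cn n) u * f u * cnj (\<xi>0 u)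
                = indicator (Cn n) u * f u * cnj (\<eta> u - \<xi>0 u)" by (simp add: algebra_simps)
            then show ?thesis by (simp add: norm_mult indicator_def cmod_cnj_diff)
          qed
          also have "\<dots> \<le> e * cmod (f u)"
          proof (cases "u \<in> Cn n")
            case True
            then have "cmod (\<eta> u - \<xi>0 u) \<le> e" using W(3)[OF eta True] by simp
            then show ?thesis using True by (simp add: mult.commute[of e] mult_left_mono)
          next
            case False
            then show ?thesis using e by simp
          qed
          finally show "cmod (indicator (Cn n) u * f u * cnj (\<eta> u) - indicator (Cn n) u * f u * cnj (\<xi>0 u)) \<le> e * cmod (f u)" .
        qed
        also have "\<dots> = e * L" unfolding L_def by simp
        also have "\<dots> < r" unfolding e_def using r L0 by (simp add: field_simps)
        finally have "dist (F n \<xi>0) (F n \<eta>) < r" by (simp add: dist_norm norm_minus_commute)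
        then show "\<eta> \<in> F n -` S \<inter> topspace dual_topology" using r(2) etad by (auto simp: topspace_dual)
      qed
      then show "\<exists>T. openin dual_topology T \<and> \<xi>0 \<in> T \<and> T \<subseteq> F n -` S \<inter> topspace dual_topology"
        by (intro exI[of _ W] conjI W(1) W(2))
    qed
    then show "F n -` S \<inter> space (borel_of dual_topology) \<in> sets (borel_of dual_topology)"
      by (simp add: openin_sets_borel_of)
  qed
  show ?thesis
  proof (rule borel_measurable_LIMSEQ_metric[OF Fmeas])
    fix \<xi> :: "'g \<Rightarrow> complex" assume "\<xi> \<in> space (borel_of dual_topology)"
    then have xi: "\<xi> \<in> dual_group" by (simp add: topspace_dual)
    show "(\<lambda>n. F n \<xi>) \<longlonglongrightarrow> (\<integral>u. f u * cnj (\<xi> u) \<partial>nu)"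
      unfolding F_def
    proof (rule integral_dominated_convergence[where w="\<lambda>u. cmod (f u)"])
      show "(\<lambda>u. f u * cnj (\<xi> u)) \<in> borel_measurable nu"
        using borel_measurable_integrable[OF f] meas_dual_cnj[OF xi] by (rule borel_measurable_times)
      show "(\<lambda>u. indicator (Cn n) u * f u * cnj (\<xi> u)) \<in> borel_measurable nu" for n
        using intF[OF xi] by (rule borel_measurable_integrable)
      show "integrable nu (\<lambda>u. cmod (f u))" by (rule integrable_norm[OF f])
      show "AE u in nu. (\<lambda>n. indicator (Cn n) u * f u * cnj (\<xi> u)) \<longlonglongrightarrow> f u * cnj (\<xi> u)"
      proof (rule AE_I2)
        fix u
        obtain m where m: "u \<in> C m" using C(2) by auto
        have "eventually (\<lambda>n. indicator (Cn n) u * f u * cnj (\<xi> u) = f u * cnj (\<xi> u)) sequentially"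
          unfolding eventually_sequentially
          by (rule exI[of _ m]) (use m in \<open>auto simp: Cn_def indicator_def\<close>)
        then show "(\<lambda>n. indicator (Cn n) u * f u * cnj (\<xi> u)) \<longlonglongrightarrow> f u * cnj (\<xi> u)"
          by (rule tendsto_eventually)
      qed
      show "AE u in nu. cmod (indicator (Cn n) u * f u * cnj (\<xi> u)) \<le> cmod (f u)" for n
        using dual_facts(2)[OF xi] by (auto simp: norm_mult indicator_def)
    qed
  qed
qed

end

lemma sq_int_diff:
  assumes "square_integrable M h" "square_integrable M d"
  shows "integrable M (\<lambda>x. (cmod (h x - d x))\<^sup>2)"
proof (rule Bochner_Integration.integrable_bound)
  show "integrable M (\<lambda>x. 2 * (cmod (h x))\<^sup>2 + 2 * (cmod (d x))\<^sup>2)"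
    using assms unfolding square_integrable_def by auto
  have [measurable]: "h \<in> borel_measurable M" "d \<in> borel_measurable M"
    using assms unfolding square_integrable_def by auto
  show "(\<lambda>x. (cmod (h x - d x))\<^sup>2) \<in> borel_measurable M"
    by measurable
  show "AE x in M. norm ((cmod (h x - d x))\<^sup>2) \<le> norm (2 * (cmod (h x))\<^sup>2 + 2 * (cmod (d x))\<^sup>2)"
  proof (rule AE_I2)
    fix x
    have "cmod (h x - d x) \<le> cmod (h x) + cmod (d x)" by (rule norm_triangle_ineq4)
    then have "(cmod (h x - d x))\<^sup>2 \<le> (cmod (h x) + cmod (d x))\<^sup>2"
      by (intro power_mono) auto
    also have "\<dots> \<le> 2 * (cmod (h x))\<^sup>2 + 2 * (cmod (d x))\<^sup>2"
    proof -
      have "0 \<le> (cmod (h x) - cmod (d x))\<^sup>2" by simp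
      moreover have "(cmod (h x) + cmod (d x))\<^sup>2 = (cmod (h x))\<^sup>2 + (cmod (d x))\<^sup>2 + 2 * cmod (h x) * cmod (d x)"
        by (rule power2_sum)
      moreover have "(cmod (h x) - cmod (d x))\<^sup>2 = (cmod (h x))\<^sup>2 + (cmod (d x))\<^sup>2 - 2 * cmod (h x) * cmod (d x)"
        by (rule power2_diff)
      ultimately show ?thesis by linarith
    qed
    finally show "norm ((cmod (h x - d x))\<^sup>2) \<le> norm (2 * (cmod (h x))\<^sup>2 + 2 * (cmod (d x))\<^sup>2)"
      by simp
  qed
qed

lemma amgm_bound:
  fixes z t :: real
  assumes "t > 0"
  shows "\<bar>z\<bar> \<le> t / 2 * z\<^sup>2 + 1 / (2 * t)"
proof -
  have "0 \<le> (t * \<bar>z\<bar> - 1)\<^sup>2" by simp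
  then have "2 * t * \<bar>z\<bar> \<le> t\<^sup>2 * z\<^sup>2 + 1" by (simp add: power2_eq_square algebra_simps)
  then show ?thesis using assms by (simp add: field_simps power2_eq_square)
qed

context haar_ctx begin

lemma Cn_exists: "\<exists>Cn :: nat \<Rightarrow> 'g set. (\<forall>n. Cn n \<in> sets nu) \<and> (\<forall>n. emeasure nu (Cn n) < \<infinity>)
   \<and> (\<forall>u. \<exists>m. \<forall>n\<ge>m. u \<in> Cn n)"
proof -
  obtain C :: "nat \<Rightarrow> 'g set" where C: "\<And>n. compact (C n)" "(\<Union>n. C n) = UNIV"
    using G unfolding metrizable_sigma_compact_lca_def by (elim exE conjE) blast
  define Cn where "Cn n = (\<Union>m\<le>n. C m)" for n
  have Cn: "compact (Cn n)" for n unfolding Cn_def using C(1) by (intro compact_UN) auto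
  have "Cn n \<in> sets nu" for n using Cn[of n] by (simp add: sets_nu borel_closed compact_imp_closed)
  moreover have "emeasure nu (Cn n) < \<infinity>" for n using compact_fin[OF Cn] by simp
  moreover have "\<exists>m. \<forall>n\<ge>m. u \<in> Cn n" for u
  proof -
    obtain m where "u \<in> C m" using C(2) by auto
    then show ?thesis unfolding Cn_def by auto
  qed
  ultimately show ?thesis by (intro exI[of _ Cn]) auto
qed

lemma int_indicator_sq:
  fixes d :: "'g \<Rightarrow> complex"
  assumes d: "square_integrable nu d" and C: "C \<in> sets nu" "emeasure nu C < \<infinity>"
  shows "integrable nu (\<lambda>u. indicator C u * d u)"
proof (rule Bochner_Integration.integrable_bound)
  show "integrable nu (\<lambda>u. (cmod (d u))\<^sup>2 + indicator C u :: real)"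
    using d C unfolding square_integrable_def by auto
  show "(\<lambda>u. indicator C u * d u) \<in> borel_measurable nu"
    using d C unfolding square_integrable_def by (intro borel_measurable_times) auto
  show "AE x in nu. norm (indicator C x * d x) \<le> norm ((cmod (d x))\<^sup>2 + indicator C x :: real)"
  proof (rule AE_I2)
    fix x
    have "cmod (d x) \<le> (cmod (d x))\<^sup>2 + 1"
      using amgm_bound[of 2 "cmod (d x)"] by simp
    then show "norm (indicator C x * d x) \<le> norm ((cmod (d x))\<^sup>2 + indicator C x :: real)"
      by (auto simp: indicator_def norm_mult)
  qed
qed

lemma L1_sep:
  assumes sep: "L2_separable nu"
  shows "\<exists>F :: nat \<Rightarrow> 'g \<Rightarrow> complex. (\<forall>n. integrable nu (F n)) \<and>
           (\<forall>f. integrable nu f \<longrightarrow> (\<forall>e>0. \<exists>n. (\<integral>u. cmod (f u - F n u) \<partial>nu) < e))"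
proof -
  obtain D where D: "countable D" "\<And>d. d \<in> D \<Longrightarrow> square_integrable nu d"
    "\<And>f e. square_integrable nu f \<Longrightarrow> e > 0 \<Longrightarrow> \<exists>d\<in>D. (\<integral>x. (cmod (f x - d x))\<^sup>2 \<partial>nu) < e"
    using sep unfolding L2_separable_def by metis
  obtain Cn :: "nat \<Rightarrow> 'g set" where Cn: "\<And>n. Cn n \<in> sets nu" "\<And>n. emeasure nu (Cn n) < \<infinity>"
    "\<And>u. \<exists>m. \<forall>n\<ge>m. u \<in> Cn n"
    using Cn_exists by metis
  have "square_integrable nu (\<lambda>_. 0)" unfolding square_integrable_def by simp
  then have Dne: "D \<noteq> {}" using D(3)[of "\<lambda>_. 0" 1] by auto
  define GG where "GG = (\<lambda>(n,d). (\<lambda>u. indicator (Cn n) u * d u)) ` (UNIV \<times> D)"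
  have cGG: "countable GG" unfolding GG_def using D(1) by auto
  have GGne: "GG \<noteq> {}" unfolding GG_def using Dne by auto
  define F where "F = from_nat_into GG"
  have intG: "integrable nu g" if "g \<in> GG" for g
    using that unfolding GG_def using int_indicator_sq[OF D(2) Cn(1) Cn(2)] by auto
  have intF: "integrable nu (F n)" for n
    unfolding F_def by (rule intG[OF from_nat_into[OF GGne]])
  have approx: "\<exists>n. (\<integral>u. cmod (f u - F n u) \<partial>nu) < e" if f: "integrable nu f" and e: "e > 0" for f e
  proof -
    have fm[measurable]: "f \<in> borel_measurable nu" using f by (rule borel_measurable_integrable)
    have Cnm[measurable]: "Cn n \<in> sets nu" for n by (rule Cn(1))
    define h where "h n u = indicator (Cn n) u * (if cmod (f u) \<le> real n then f u else 0)" for n u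
    have hm[measurable]: "h n \<in> borel_measurable nu" for n unfolding h_def by measurable
    have hb: "cmod (h n u) \<le> cmod (f u)" for n u by (auto simp: h_def indicator_def)
    have hb2: "cmod (h n u) \<le> real n * indicator (Cn n) u" for n u by (auto simp: h_def indicator_def)
    have inth: "integrable nu (h n)" for n
      by (rule Bochner_Integration.integrable_bound[OF f hm]) (use hb in auto)
    have hlim: "(\<lambda>n. \<integral>u. cmod (f u - h n u) \<partial>nu) \<longlonglongrightarrow> (\<integral>u. 0 \<partial>nu)"
    proof (rule integral_dominated_convergence[where w="\<lambda>u. cmod (f u)"])
      show "(\<lambda>u. 0::real) \<in> borel_measurable nu" by simp
      show "(\<lambda>u. cmod (f u - h n u)) \<in> borel_measurable nu" for n by measurable
      show "integrable nu (\<lambda>u. cmod (f u))" by (rule integrable_norm[OF f])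
      show "AE u in nu. (\<lambda>n. cmod (f u - h n u)) \<longlonglongrightarrow> 0"
      proof (rule AE_I2)
        fix u
        obtain m where m: "\<forall>n\<ge>m. u \<in> Cn n" using Cn(3) by blast
        obtain N where N: "cmod (f u) \<le> real N" using real_arch_simple by blast
        have "eventually (\<lambda>n. cmod (f u - h n u) = 0) sequentially"
          unfolding eventually_sequentially
        proof (intro exI[of _ "max m N"] allI impI)
          fix n assume "max m N \<le> n"
          then have "u \<in> Cn n" "cmod (f u) \<le> real n" using m N by auto
          then show "cmod (f u - h n u) = 0" by (simp add: h_def)
        qed
        then show "(\<lambda>n. cmod (f u - h n u)) \<longlonglongrightarrow> 0" by (rule tendsto_eventually)
      qed
      show "AE u in nu. norm (cmod (f u - h n u)) \<le> cmod (f u)" for n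
        by (rule AE_I2) (auto simp: h_def indicator_def)
    qed
    have "e / 3 > 0" using e by simp
    from order_tendstoD(2)[OF hlim[simplified] this] obtain n where
      n: "(\<integral>u. cmod (f u - h n u) \<partial>nu) < e / 3"
      unfolding eventually_sequentially by auto
    define C where "C = Cn n"
    have Cs: "C \<in> sets nu" and Cf: "emeasure nu C < \<infinity>" unfolding C_def using Cn by auto
    define mu where "mu = measure nu C"
    have mu0: "mu \<ge> 0" unfolding mu_def by simp
    have sqh: "square_integrable nu (h n)"
      unfolding square_integrable_def
    proof
      show "h n \<in> borel_measurable nu" by (rule hm)
      show "integrable nu (\<lambda>x. (cmod (h n x))\<^sup>2)"
      proof (rule Bochner_Integration.integrable_bound)
        show "integrable nu (\<lambda>u. (real n)\<^sup>2 * indicator C u :: real)" using Cs Cf by auto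
        show "(\<lambda>x. (cmod (h n x))\<^sup>2) \<in> borel_measurable nu" by measurable
        show "AE x in nu. norm ((cmod (h n x))\<^sup>2) \<le> norm ((real n)\<^sup>2 * indicator C x :: real)"
        proof (rule AE_I2)
          fix x
          have "(cmod (h n x))\<^sup>2 \<le> (real n * indicator (Cn n) x)\<^sup>2"
            by (rule power_mono[OF hb2]) simp
          then show "norm ((cmod (h n x))\<^sup>2) \<le> norm ((real n)\<^sup>2 * indicator C x :: real)"
            by (auto simp: C_def indicator_def power_mult_distrib)
        qed
      qed
    qed
    define t where "t = 3 * (mu + 1) / e"
    have t: "t > 0" unfolding t_def using mu0 e by simp
    define del where "del = e / (3 * t)"
    have del: "del > 0" unfolding del_def using e t by simp
    obtain d where d: "d \<in> D" "(\<integral>x. (cmod (h n x - d x))\<^sup>2 \<partial>nu) < del"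
      using D(3)[OF sqh del] by blast
    have sqd: "square_integrable nu d" by (rule D(2)[OF d(1)])
    have intCd: "integrable nu (\<lambda>u. indicator C u * d u)" by (rule int_indicator_sq[OF sqd Cs Cf])
    have intsq: "integrable nu (\<lambda>x. (cmod (h n x - d x))\<^sup>2)" by (rule sq_int_diff[OF sqh sqd])
    have "(\<integral>u. cmod (h n u - indicator C u * d u) \<partial>nu)
        \<le> (\<integral>u. t / 2 * (cmod (h n u - d u))\<^sup>2 + indicator C u * (1 / (2 * t)) \<partial>nu)"
    proof (rule Bochner_Integration.integral_mono)
      show "integrable nu (\<lambda>u. cmod (h n u - indicator C u * d u))"
        by (rule integrable_norm[OF Bochner_Integration.integrable_diff[OF inth intCd]])
      show "integrable nu (\<lambda>u. t / 2 * (cmod (h n u - d u))\<^sup>2 + indicator C u * (1 / (2 * t)))"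
        using intsq Cs Cf by auto
      fix u
      show "cmod (h n u - indicator C u * d u) \<le> t / 2 * (cmod (h n u - d u))\<^sup>2 + indicator C u * (1 / (2 * t))"
      proof (cases "u \<in> C")
        case True
        then show ?thesis using amgm_bound[OF t, of "cmod (h n u - d u)"] by simp
      next
        case False
        then have "h n u = 0" by (simp add: h_def C_def)
        then show ?thesis using False t by simp
      qed
    qed
    also have "\<dots> = t / 2 * (\<integral>x. (cmod (h n x - d x))\<^sup>2 \<partial>nu) + mu * (1 / (2 * t))"
      using intsq Cs Cf by (simp add: mu_def)
    also have "\<dots> \<le> t / 2 * del + mu * (1 / (2 * t))"
      using d(2) t by simp
    also have "\<dots> \<le> e / 3"
    proof -
      have "t / 2 * del = e / 6" unfolding del_def using t by (simp add: field_simps)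
      moreover have "mu * (1 / (2 * t)) = e * mu / (6 * (mu + 1))" unfolding t_def using e mu0 by (simp add: field_simps)
      moreover have "e * mu / (6 * (mu + 1)) \<le> e / 6" using e mu0 by (simp add: field_simps)
      ultimately show ?thesis by linarith
    qed
    finally have I2: "(\<integral>u. cmod (h n u - indicator C u * d u) \<partial>nu) \<le> e / 3" .
    have "(\<integral>u. cmod (f u - indicator C u * d u) \<partial>nu)
        \<le> (\<integral>u. cmod (f u - h n u) + cmod (h n u - indicator C u * d u) \<partial>nu)"
    proof (rule Bochner_Integration.integral_mono)
      show "integrable nu (\<lambda>u. cmod (f u - indicator C u * d u))"
        by (rule integrable_norm[OF Bochner_Integration.integrable_diff[OF f intCd]])
      show "integrable nu (\<lambda>u. cmod (f u - h n u) + cmod (h n u - indicator C u * d u))"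
        by (intro Bochner_Integration.integrable_add integrable_norm Bochner_Integration.integrable_diff f inth intCd)
      show "cmod (f u - indicator C u * d u) \<le> cmod (f u - h n u) + cmod (h n u - indicator C u * d u)" for u
        by (rule norm_diff_triangle_ineq[of "f u" "h n u" "h n u" "indicator C u * d u", simplified])
    qed
    also have "\<dots> = (\<integral>u. cmod (f u - h n u) \<partial>nu) + (\<integral>u. cmod (h n u - indicator C u * d u) \<partial>nu)"
      by (intro Bochner_Integration.integral_add integrable_norm Bochner_Integration.integrable_diff f inth intCd)
    also have "\<dots> < e" using n I2 e by linarith
    finally have fin: "(\<integral>u. cmod (f u - indicator C u * d u) \<partial>nu) < e" .
    have "(\<lambda>u. indicator C u * d u) \<in> GG" unfolding GG_def C_def using d(1) by auto
    then have "F (to_nat_on GG (\<lambda>u. indicator C u * d u)) = (\<lambda>u. indicator C u * d u)"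
      unfolding F_def by (rule from_nat_into_to_nat_on[OF cGG])
    then show ?thesis using fin by metis
  qed
  show ?thesis by (intro exI[of _ F] conjI allI impI intF approx) auto
qed

end

theorem proposition3p4:
  fixes nu :: "'g::{ab_group_add, metric_space} measure"
    and lam :: "'y measure"
    and H :: "('g \<times> 'y \<Rightarrow> complex) set"
    and K :: "'g \<times> 'y \<Rightarrow> 'g \<times> 'y \<Rightarrow> complex"
  assumes G: "metrizable_sigma_compact_lca TYPE('g)"
    and haar: "haar_measure nu"
    and sf: "sigma_finite_measure lam"
    and sepG: "L2_separable nu"
    and sepY: "L2_separable lam"
    and rk: "rkhs_in_L2 (nu \<Otimes>\<^sub>M lam) H K"
    and transl: "\<And>u x v y. v \<in> space lam \<Longrightarrow> y \<in> space lam \<Longrightarrow>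
                   K (x, y) (u, v) = K (0, y) (u - x, v)"
    and bdd: "\<And>y. y \<in> space lam \<Longrightarrow>
                \<exists>C::real. \<forall>v\<in>space lam. (\<integral>\<^sup>+ u. ennreal (cmod (K (0, y) (u, v))) \<partial>nu) \<le> ennreal C"
  shows "\<exists>Y0 Om. Y0 \<subseteq> space lam \<and> countable Y0 \<and>
           (\<forall>y\<in>Y0. Om y \<in> sets (borel_of dual_topology)) \<and>
           (\<forall>y\<in>Y0. \<forall>y'\<in>Y0. y \<noteq> y' \<longrightarrow> Om y \<inter> Om y' = {}) \<and>
           (\<Union>y\<in>Y0. Om y) = Omega_set nu lam K \<and>
           (\<forall>y\<in>Y0. \<forall>\<xi>\<in>Om y. cpos (Lfun nu K \<xi> y y))"
proof -
  interpret haar_ctx nu by (rule haar_ctx.intro[OF G haar])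
  define Y where "Y = space lam"
  define M where "M = nu \<Otimes>\<^sub>M lam"
  have spM: "space M = UNIV \<times> Y" unfolding M_def Y_def by (simp add: space_pair_measure)
  have rkH: "\<And>f. f \<in> H \<Longrightarrow> square_integrable M f"
    and rkK: "\<And>p. p \<in> space M \<Longrightarrow> K p \<in> H"
    and rkR: "\<And>f p. f \<in> H \<Longrightarrow> p \<in> space M \<Longrightarrow> f p = L2_inner M f (K p)"
    using rk unfolding rkhs_in_L2_def M_def by auto
  define k where "k y u = K (0, y) (u, y)" for y u
  have kmeas: "k y \<in> borel_measurable nu" if y: "y \<in> Y" for y
  proof -
    have "K (0, y) \<in> borel_measurable M"
      using rkH[OF rkK] y spM unfolding square_integrable_def by auto
    then have "K (0, y) \<in> borel_measurable (nu \<Otimes>\<^sub>M lam)" unfolding M_def .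
    from measurable_compose[OF measurable_Pair2'[of y lam nu] this] y show ?thesis
      unfolding k_def Y_def by simp
  qed
  have kint: "integrable nu (k y)" if y: "y \<in> Y" for y
  proof -
    obtain C :: real where C: "\<forall>v\<in>space lam. (\<integral>\<^sup>+ u. ennreal (cmod (K (0, y) (u, v))) \<partial>nu) \<le> ennreal C"
      using bdd[of y] y unfolding Y_def by auto
    then have "(\<integral>\<^sup>+ u. ennreal (cmod (k y u)) \<partial>nu) \<le> ennreal C" using y unfolding k_def Y_def by auto
    then have "(\<integral>\<^sup>+ u. ennreal (norm (k y u)) \<partial>nu) < \<infinity>"
      using le_less_trans ennreal_less_top by fastforce
    then show ?thesis using kmeas[OF y] by (simp add: integrable_iff_bounded)
  qed
  have herm: "K p q = cnj (K q p)" if p: "p \<in> space M" and q: "q \<in> space M" for p q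
  proof -
    have "K p q = L2_inner M (K p) (K q)" using rkR[OF rkK[OF p] q] .
    moreover have "K q p = L2_inner M (K q) (K p)" using rkR[OF rkK[OF q] p] .
    moreover have "cnj (\<integral>x. K q x * cnj (K p x) \<partial>M) = (\<integral>x. cnj (K q x * cnj (K p x)) \<partial>M)"
      by (rule Bochner_Integration.integral_cnj[symmetric])
    moreover have "(\<integral>x. cnj (K q x * cnj (K p x)) \<partial>M) = (\<integral>x. K p x * cnj (K q x) \<partial>M)"
      by (simp add: mult.commute)
    ultimately show ?thesis unfolding L2_inner_def by simp
  qed
  have kneg: "k y (- u) = cnj (k y u)" if y: "y \<in> Y" for y u
  proof -
    have "K (u, y) (0, y) = K (0, y) (0 - u, y)" using transl[of y y u 0] y unfolding Y_def by simp
    moreover have "K (u, y) (0, y) = cnj (K (0, y) (u, y))" by (rule herm) (use spM y in auto)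
    ultimately show ?thesis unfolding k_def by simp
  qed
  have Lk: "Lfun nu K \<xi> y y = (\<integral>u. k y u * cnj (\<xi> u) \<partial>nu)" for \<xi> y
    unfolding Lfun_def k_def ..
  have real: "Im (Lfun nu K \<xi> y y) = 0" if y: "y \<in> Y" and xi: "\<xi> \<in> dual_group" for \<xi> y
  proof -
    have m: "(\<lambda>u. k y u * cnj (\<xi> u)) \<in> borel_measurable nu"
      using kmeas[OF y] meas_dual_cnj[OF xi] by (rule borel_measurable_times)
    have "Lfun nu K \<xi> y y = (\<integral>u. k y (- u) * cnj (\<xi> (- u)) \<partial>nu)"
      unfolding Lk using integral_uminus[OF m] by simp
    also have "\<dots> = (\<integral>u. cnj (k y u * cnj (\<xi> u)) \<partial>nu)"
      using kneg[OF y] dual_uminus[OF xi] by simp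
    also have "\<dots> = cnj (Lfun nu K \<xi> y y)" unfolding Lk by (rule Bochner_Integration.integral_cnj)
    finally have "Lfun nu K \<xi> y y = cnj (Lfun nu K \<xi> y y)" .
    then show ?thesis by (metis add.inverse_unique complex_cnj_cancel_iff complex_cnj_complex_of_real
        Im_complex_of_real complex_is_Real_iff Reals_cnj_iff)
  qed
  have Ldiff: "cmod (Lfun nu K \<xi> y y - Lfun nu K \<xi> y' y') \<le> (\<integral>u. cmod (k y u - k y' u) \<partial>nu)"
    if y: "y \<in> Y" and y': "y' \<in> Y" and xi: "\<xi> \<in> dual_group" for \<xi> y y'
  proof -
    have i1: "integrable nu (\<lambda>u. cnj (\<xi> u) * k y u)"
      by (rule int_weighted[OF kint[OF y] meas_dual_cnj[OF xi]]) (use dual_facts(2)[OF xi] in simp)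
    have i2: "integrable nu (\<lambda>u. cnj (\<xi> u) * k y' u)"
      by (rule int_weighted[OF kint[OF y'] meas_dual_cnj[OF xi]]) (use dual_facts(2)[OF xi] in simp)
    have "Lfun nu K \<xi> y y - Lfun nu K \<xi> y' y' = (\<integral>u. cnj (\<xi> u) * k y u - cnj (\<xi> u) * k y' u \<partial>nu)"
      unfolding Lk using Bochner_Integration.integral_diff[OF i1 i2] by (simp add: mult.commute)
    also have "cmod \<dots> \<le> (\<integral>u. cmod (cnj (\<xi> u) * k y u - cnj (\<xi> u) * k y' u) \<partial>nu)"
      by (rule integral_norm_bound)
    also have "\<dots> = (\<integral>u. cmod (k y u - k y' u) \<partial>nu)"
    proof (rule Bochner_Integration.integral_cong[OF refl])
      fix u
      have "cnj (\<xi> u) * k y u - cnj (\<xi> u) * k y' u = cnj (\<xi> u) * (k y u - k y' u)" by (simp add: algebra_simps)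
      then show "cmod (cnj (\<xi> u) * k y u - cnj (\<xi> u) * k y' u) = cmod (k y u - k y' u)"
        using dual_facts(2)[OF xi] by (simp add: norm_mult)
    qed
    finally show ?thesis .
  qed
  obtain F :: "nat \<Rightarrow> 'g \<Rightarrow> complex" where Fint: "\<And>n. integrable nu (F n)"
    and Fapp: "\<And>f e. integrable nu f \<Longrightarrow> e > 0 \<Longrightarrow> \<exists>n. (\<integral>u. cmod (f u - F n u) \<partial>nu) < e"
    using L1_sep[OF sepG] by metis
  define S where "S n m = {y\<in>Y. (\<integral>u. cmod (k y u - F n u) \<partial>nu) < 1 / Suc m}" for n m
  define sel where "sel n m = (SOME y. y \<in> S n m)" for n m
  define Y0 where "Y0 = (\<lambda>(n,m). sel n m) ` {(n,m). S n m \<noteq> {}}"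
  have selS: "S n m \<noteq> {} \<Longrightarrow> sel n m \<in> S n m" for n m
    unfolding sel_def by (rule someI_ex) blast
  have Y0Y: "Y0 \<subseteq> Y" unfolding Y0_def using selS by (auto simp: S_def)
  have cY0: "countable Y0" unfolding Y0_def by auto
  have Y0app: "\<exists>y'\<in>Y0. (\<integral>u. cmod (k y u - k y' u) \<partial>nu) < e" if y: "y \<in> Y" and e: "e > 0" for y e
  proof -
    obtain m where m: "1 / Suc m < e / 2" using nat_approx_posE[of "e/2"] e by auto
    obtain n where n: "(\<integral>u. cmod (k y u - F n u) \<partial>nu) < 1 / Suc m"
      using Fapp[OF kint[OF y]] by (metis of_nat_0_less_iff zero_less_Suc zero_less_divide_1_iff)
    have "y \<in> S n m" unfolding S_def using y n by simp
    then have ne: "S n m \<noteq> {}" by auto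
    define y' where "y' = sel n m"
    have y'S: "y' \<in> S n m" unfolding y'_def by (rule selS[OF ne])
    have y'Y0: "y' \<in> Y0" unfolding Y0_def y'_def using ne by auto
    have y'Y: "y' \<in> Y" using y'S by (simp add: S_def)
    have "(\<integral>u. cmod (k y u - k y' u) \<partial>nu) \<le> (\<integral>u. cmod (k y u - F n u) + cmod (k y' u - F n u) \<partial>nu)"
    proof (rule Bochner_Integration.integral_mono)
      show "integrable nu (\<lambda>u. cmod (k y u - k y' u))"
        by (intro integrable_norm Bochner_Integration.integrable_diff kint y y'Y)
      show "integrable nu (\<lambda>u. cmod (k y u - F n u) + cmod (k y' u - F n u))"
        by (intro Bochner_Integration.integrable_add integrable_norm Bochner_Integration.integrable_diff kint y y'Y Fint)
      show "cmod (k y u - k y' u) \<le> cmod (k y u - F n u) + cmod (k y' u - F n u)" for u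
        by (rule norm_diff_triangle_le) (auto simp: norm_minus_commute)
    qed
    also have "\<dots> = (\<integral>u. cmod (k y u - F n u) \<partial>nu) + (\<integral>u. cmod (k y' u - F n u) \<partial>nu)"
      by (intro Bochner_Integration.integral_add integrable_norm Bochner_Integration.integrable_diff kint y y'Y Fint)
    also have "\<dots> < e" using n y'S m unfolding S_def by simp
    finally show ?thesis using y'Y0 by blast
  qed
  define P where "P y = {\<xi>\<in>dual_group. cpos (Lfun nu K \<xi> y y)}" for y
  define idx where "idx = to_nat_on Y0"
  define Om where "Om y = P y - (\<Union>y'\<in>{y'\<in>Y0. idx y' < idx y}. P y')" for y
  have Lmeas: "(\<lambda>\<xi>. Lfun nu K \<xi> y y) \<in> borel_measurable (borel_of dual_topology)" if y: "y \<in> Y" for y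
    unfolding Lk by (rule ft_meas[OF kint[OF y]])
  have Pmeas: "P y \<in> sets (borel_of dual_topology)" if y: "y \<in> Y" for y
  proof -
    have [measurable]: "(\<lambda>\<xi>. Lfun nu K \<xi> y y) \<in> borel_measurable (borel_of dual_topology)"
      by (rule Lmeas[OF y])
    have "{\<xi>\<in>space (borel_of dual_topology). cpos (Lfun nu K \<xi> y y)} \<in> sets (borel_of dual_topology)"
      unfolding cpos_def by measurable
    then show ?thesis unfolding P_def by (simp add: topspace_dual)
  qed
  have Ommeas: "\<forall>y\<in>Y0. Om y \<in> sets (borel_of dual_topology)"
  proof
    fix y assume y: "y \<in> Y0"
    have "(\<Union>y'\<in>{y'\<in>Y0. idx y' < idx y}. P y') \<in> sets (borel_of dual_topology)"
      by (rule sets.countable_UN'') (use cY0 Y0Y Pmeas in \<open>auto intro: countable_subset\<close>)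
    then show "Om y \<in> sets (borel_of dual_topology)"
      unfolding Om_def using Pmeas y Y0Y by auto
  qed
  have inj: "inj_on idx Y0" unfolding idx_def using cY0 by auto
  have disj: "\<forall>y\<in>Y0. \<forall>y'\<in>Y0. y \<noteq> y' \<longrightarrow> Om y \<inter> Om y' = {}"
  proof (intro ballI impI)
    fix y y' assume y: "y \<in> Y0" and y': "y' \<in> Y0" and ne: "y \<noteq> y'"
    have "idx y \<noteq> idx y'" using inj y y' ne by (auto dest: inj_onD)
    then consider "idx y < idx y'" | "idx y' < idx y" by linarith
    then show "Om y \<inter> Om y' = {}"
    proof cases
      case 1 then show ?thesis unfolding Om_def using y by blast
    next
      case 2 then show ?thesis unfolding Om_def using y' by blast
    qed
  qed
  have PsubOm: "(\<Union>y\<in>Y0. P y) \<subseteq> (\<Union>y\<in>Y0. Om y)"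
  proof
    fix \<xi> assume "\<xi> \<in> (\<Union>y\<in>Y0. P y)"
    then have ex: "\<exists>n. \<exists>z\<in>Y0. idx z = n \<and> \<xi> \<in> P z" by blast
    define n where "n = (LEAST n. \<exists>z\<in>Y0. idx z = n \<and> \<xi> \<in> P z)"
    obtain z where z: "z \<in> Y0" "idx z = n" "\<xi> \<in> P z"
      using LeastI_ex[OF ex] unfolding n_def by blast
    have "\<xi> \<notin> P z'" if z'1: "z' \<in> Y0" and z'2: "idx z' < idx z" for z'
    proof -
      have "idx z' < (LEAST n. \<exists>z\<in>Y0. idx z = n \<and> \<xi> \<in> P z)" using z'2 z(2) unfolding n_def by simp
      then have "\<not> (\<exists>z\<in>Y0. idx z = idx z' \<and> \<xi> \<in> P z)" by (rule not_less_Least)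
      then show ?thesis using z'1 by auto
    qed
    then have "\<xi> \<in> Om z" unfolding Om_def using z(3) by blast
    then show "\<xi> \<in> (\<Union>y\<in>Y0. Om y)" using z(1) by blast
  qed
  have union: "(\<Union>y\<in>Y0. Om y) = Omega_set nu lam K"
  proof
    show "(\<Union>y\<in>Y0. Om y) \<subseteq> Omega_set nu lam K"
      unfolding Om_def P_def Omega_set_def using Y0Y Y_def by blast
  next
    show "Omega_set nu lam K \<subseteq> (\<Union>y\<in>Y0. Om y)"
    proof
      fix \<xi> assume "\<xi> \<in> Omega_set nu lam K"
      then obtain y where xi: "\<xi> \<in> dual_group" and y: "y \<in> Y" and cp: "cpos (Lfun nu K \<xi> y y)"
        unfolding Omega_set_def Y_def by blast
      define c where "c = Re (Lfun nu K \<xi> y y)"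
      have c: "c > 0" using cp unfolding cpos_def c_def by simp
      obtain y' where y': "y' \<in> Y0" "(\<integral>u. cmod (k y u - k y' u) \<partial>nu) < c"
        using Y0app[OF y c] by blast
      have y'Y: "y' \<in> Y" using y' Y0Y by blast
      have "cmod (Lfun nu K \<xi> y y - Lfun nu K \<xi> y' y') < c"
        using Ldiff[OF y y'Y xi] y'(2) by linarith
      then have "\<bar>Re (Lfun nu K \<xi> y y - Lfun nu K \<xi> y' y')\<bar> < c"
        using abs_Re_le_cmod le_less_trans by blast
      then have "Re (Lfun nu K \<xi> y' y') > 0" unfolding c_def by simp
      then have "cpos (Lfun nu K \<xi> y' y')" unfolding cpos_def using real[OF y'Y xi] by simp
      then have "\<xi> \<in> (\<Union>y\<in>Y0. P y)" unfolding P_def using xi y'(1) by blast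
      then show "\<xi> \<in> (\<Union>y\<in>Y0. Om y)" using PsubOm by blast
    qed
  qed
  have pos: "\<forall>y\<in>Y0. \<forall>\<xi>\<in>Om y. cpos (Lfun nu K \<xi> y y)"
    unfolding Om_def P_def by blast
  show ?thesis
    apply (rule exI[of _ Y0], rule exI[of _ Om])
    using Y0Y cY0 Ommeas disj union pos unfolding Y_def by blast
qed

end
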